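(* Let $(k,R,t)\in\mathbb{R}^3$ with $R>0$, $t\neq 0$, $k\neq 0,1$. For a parameter $t$ let $c(t)=\frac{1-t^2}{1+t^2}$, $s(t)=\frac{2t}{1+t^2}$ and let $T_{k,R,t}=\{(x,y,z)\in\mathbb{R}^3: F_1=F_2=0\}$ with $$F_1=y^2-(xs(t)-yc(t))^2+2z-1,\qquad F_2=\bigl(x^2-2kz+R^2+k^2\bigr)^2-4R^2(x^2+y^2).$$ Then the trisectors $T_{k,R,t}$ and $T_{k,R,-t}$ are projectively equivalent (their projective closures in $\mathbb{P}^3$ are related by a projective linear transformation). In particular, the sign of $t$ does not affect the real projective topology of the trisector.
   Context: $T_{k,R,t}$ is the trisector of the $x$-axis $L_1$, the line $L_2$ through $(0,0,1)$ with direction $(c,s,0)$, and the circle of radius $R$ centered at $(0,0,k)$ in the plane $z=k$, defined as the common zero set of the two bisector polynomials above; its projective closure is obtained by homogenizing with $x=X/W$, $y=Y/W$, $z=Z/W$ and saturating with respect to $W$. *)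

theory Defs
  imports "HOL-Analysis.Analysis"
begin

text \<open>Rational parametrisation of the direction of the line L2.\<close>
definition cpar :: "real \<Rightarrow> real" where "cpar t = (1 - t^2) / (1 + t^2)"
definition spar :: "real \<Rightarrow> real" where "spar t = (2 * t) / (1 + t^2)"

text \<open>The two affine bisector polynomials (as functions on R^3).\<close>
definition F1 :: "real \<Rightarrow> real \<Rightarrow> real \<Rightarrow> real \<Rightarrow> real" where
  "F1 t x y z = y^2 - (x * spar t - y * cpar t)^2 + 2 * z - 1"
definition F2 :: "real \<Rightarrow> real \<Rightarrow> real \<Rightarrow> real \<Rightarrow> real \<Rightarrow> real" where
  "F2 k R x y z = (x^2 - 2 * k * z + R^2 + k^2)^2 - 4 * R^2 * (x^2 + y^2)"

definition trisector :: "real \<Rightarrow> real \<Rightarrow> real \<Rightarrow> (real \<times> real \<times> real) set" where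
  "trisector k R t = {(x, y, z). F1 t x y z = 0 \<and> F2 k R x y z = 0}"

text \<open>Polynomial functions in the homogeneous coordinates (X,Y,Z,W) = (v$1,v$2,v$3,v$4).
  Over the infinite field R these correspond bijectively to R[X,Y,Z,W].\<close>
inductive polyfun4 :: "(real^4 \<Rightarrow> real) \<Rightarrow> bool" where
  pf_const: "polyfun4 (\<lambda>v. c)"
| pf_coord: "polyfun4 (\<lambda>v. v $ i)"
| pf_add: "polyfun4 f \<Longrightarrow> polyfun4 g \<Longrightarrow> polyfun4 (\<lambda>v. f v + g v)"
| pf_mult: "polyfun4 f \<Longrightarrow> polyfun4 g \<Longrightarrow> polyfun4 (\<lambda>v. f v * g v)"

text \<open>Homogenisations (x = X/W, y = Y/W, z = Z/W) of F1 (degree 2) and F2 (degree 4).\<close>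
definition F1h :: "real \<Rightarrow> real^4 \<Rightarrow> real" where
  "F1h t v = (v$2)^2 - (v$1 * spar t - v$2 * cpar t)^2 + 2 * v$3 * v$4 - (v$4)^2"
definition F2h :: "real \<Rightarrow> real \<Rightarrow> real^4 \<Rightarrow> real" where
  "F2h k R v = ((v$1)^2 - 2 * k * v$3 * v$4 + (R^2 + k^2) * (v$4)^2)^2
               - 4 * R^2 * ((v$1)^2 + (v$2)^2) * (v$4)^2"

text \<open>Saturation (I : W^\<infinity>) of the ideal I = (F1h, F2h) in R[X,Y,Z,W].\<close>
definition sat_ideal :: "real \<Rightarrow> real \<Rightarrow> real \<Rightarrow> (real^4 \<Rightarrow> real) set" where
  "sat_ideal k R t = {G. polyfun4 G \<and>
     (\<exists>m::nat. \<exists>A B. polyfun4 A \<and> polyfun4 B \<and>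
        (\<forall>v. (v$4)^m * G v = A v * F1h t v + B v * F2h k R v))}"

text \<open>Projective closure of T_{k,R,t}: its (real) points in P^3, represented as the cone of
  nonzero homogeneous coordinate vectors on which every element of the saturation vanishes.\<close>
definition proj_closure :: "real \<Rightarrow> real \<Rightarrow> real \<Rightarrow> (real^4) set" where
  "proj_closure k R t = {v. v \<noteq> 0 \<and> (\<forall>G \<in> sat_ideal k R t. G v = 0)}"

end

theory Submission
  imports Defs
begin

definition sig :: "real^4 \<Rightarrow> real^4" where
  "sig v = (\<chi> i. if i = 1 then - (v$i) else v$i)"

lemma sig_nth: "sig v $ i = (if i = 1 then - (v$1) else v$i)"
  by (simp add: sig_def)

lemma sig_sig: "sig (sig v) = v"
  by (simp add: vec_eq_iff sig_nth)

lemma sig_linear: "linear sig"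
  by (rule linearI) (auto simp: vec_eq_iff sig_nth)

lemma sig_4: "sig v $ 4 = v $ 4" "sig v $ 2 = v $ 2" "sig v $ 3 = v $ 3" "sig v $ 1 = - (v $ 1)"
  by (simp_all add: sig_nth)

lemma pf_sig: "polyfun4 f \<Longrightarrow> polyfun4 (\<lambda>v. f (sig v))"
proof (induction rule: polyfun4.induct)
  case (pf_const c) then show ?case by (rule polyfun4.pf_const)
next
  case (pf_coord i)
  show ?case
  proof (cases "i = 1")
    case True
    have "polyfun4 (\<lambda>v. (-1) * v $ i)"
      by (intro polyfun4.pf_mult polyfun4.pf_const polyfun4.pf_coord)
    then show ?thesis using True by (simp add: sig_nth)
  next
    case False
    then show ?thesis using polyfun4.pf_coord[of i] by (simp add: sig_nth)
  qed
next
  case (pf_add f g) show ?case by (rule polyfun4.pf_add[OF pf_add.IH])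
next
  case (pf_mult f g) show ?case by (rule polyfun4.pf_mult[OF pf_mult.IH])
qed

lemma spar_neg: "spar (-t) = - spar t" by (simp add: spar_def)
lemma cpar_neg: "cpar (-t) = cpar t" by (simp add: cpar_def)

lemma F1h_sig: "F1h t (sig v) = F1h (-t) v"
  unfolding F1h_def sig_4 spar_neg cpar_neg by simp

lemma F2h_sig: "F2h k R (sig v) = F2h k R v"
  unfolding F2h_def sig_4 by simp

lemma sat_sig: "G \<in> sat_ideal k R t \<Longrightarrow> (\<lambda>v. G (sig v)) \<in> sat_ideal k R (-t)"
proof -
  assume "G \<in> sat_ideal k R t"
  then obtain m A B where G: "polyfun4 G" "polyfun4 A" "polyfun4 B"
    "\<forall>v. (v$4)^m * G v = A v * F1h t v + B v * F2h k R v"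
    unfolding sat_ideal_def by blast
  have "\<forall>v. (v$4)^m * G (sig v) = A (sig v) * F1h (-t) v + B (sig v) * F2h k R v"
  proof
    fix v
    have "(sig v $ 4)^m * G (sig v) = A (sig v) * F1h t (sig v) + B (sig v) * F2h k R (sig v)"
      using G(4) by blast
    then show "(v$4)^m * G (sig v) = A (sig v) * F1h (-t) v + B (sig v) * F2h k R v"
      by (simp only: sig_4 F1h_sig F2h_sig)
  qed
  then show ?thesis unfolding sat_ideal_def using G pf_sig by blast
qed

lemma pc_sig: "v \<in> proj_closure k R t \<Longrightarrow> sig v \<in> proj_closure k R (-t)"
proof -
  assume v: "v \<in> proj_closure k R t"
  have s0: "sig 0 = 0" by (simp add: vec_eq_iff sig_nth)
  have "sig v \<noteq> 0"
  proof
    assume "sig v = 0"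
    then have "v = 0" using sig_sig[of v] s0 by simp
    then show False using v unfolding proj_closure_def by simp
  qed
  moreover have "G (sig v) = 0" if "G \<in> sat_ideal k R (-t)" for G
  proof -
    have h: "(\<lambda>v. G (sig v)) \<in> sat_ideal k R t" using sat_sig[OF that] by simp
    have "\<forall>G\<in>sat_ideal k R t. G v = 0" using v unfolding proj_closure_def by blast
    from bspec[OF this h] show ?thesis by simp
  qed
  ultimately show ?thesis unfolding proj_closure_def by blast
qed

theorem lemma1:
  fixes k R t :: real
  assumes "R > 0" and "t \<noteq> 0" and "k \<noteq> 0" and "k \<noteq> 1"
  shows "\<exists>A :: real^4^4. invertible A \<and>
           (\<lambda>v. A *v v) ` proj_closure k R t = proj_closure k R (-t)"
proof (intro exI conjI)
  have mv0: "(\<lambda>x. matrix sig *v x) = sig"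
    by (rule matrix_vector_mul(2)[OF sig_linear])
  have mv: "matrix sig *v v = sig v" for v
    using fun_cong[OF mv0, of v] by simp
  have ss: "sig \<circ> sig = id" by (rule ext) (simp add: sig_sig)
  have "matrix sig ** matrix sig = mat 1"
    using matrix_compose[OF sig_linear sig_linear] ss matrix_id_mat_1 by metis
  then show "invertible (matrix sig)" unfolding invertible_def by blast
  show "(\<lambda>v. matrix sig *v v) ` proj_closure k R t = proj_closure k R (-t)"
  proof
    show "(\<lambda>v. matrix sig *v v) ` proj_closure k R t \<subseteq> proj_closure k R (-t)"
      using pc_sig by (auto simp: mv)
    show "proj_closure k R (-t) \<subseteq> (\<lambda>v. matrix sig *v v) ` proj_closure k R t"
    proof
      fix w assume "w \<in> proj_closure k R (-t)"
      then have "sig w \<in> proj_closure k R t" using pc_sig[of w k R "-t"] by simp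
      then show "w \<in> (\<lambda>v. matrix sig *v v) ` proj_closure k R t"
        by (metis image_eqI mv sig_sig)
    qed
  qed
qed

end
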